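(* Let $(X,d)$ be a Cantor space and let $f\in\mathcal{H}(X)$ be equicontinuous. Then $f$ is topologically stable if and only if $f$ has the strict periodic shadowing property.
   Context: A Cantor space is a compact metric space without isolated points that is totally disconnected. $\mathcal{H}(X)$, $d_{C^0}$, $D$: set of homeomorphisms, $d_{C^0}(f,g)=\sup_x d(f(x),g(x))$, $D(f,g)=\max\{d_{C^0}(f,g),d_{C^0}(f^{-1},g^{-1})\}$. Equicontinuous: for every $\epsilon>0$ there is $\delta>0$ with $d(x,y)\le\delta\Rightarrow\sup_{i\in\mathbb{Z}}d(f^i(x),f^i(y))\le\epsilon$. Strict periodic shadowing property: for every $\epsilon>0$ there is $\delta>0$ such that for every $(x_i)_{i=0}^m$, $m\ge1$, with $d(f(x_i),x_{i+1})\le\delta$ and $x_0=x_m$, there is $p$ with $f^m(p)=p$ and $d(x_i,f^i(p))\le\epsilon$ for $0\le i\le m$. Topologically stable: for every $\epsilon>0$ there is $\delta>0$ such that every $g\in\mathcal{H}(X)$ with $D(f,g)<\delta$ admits a continuous $h:X\to X$ with $d_{C^0}(h,\mathrm{id}_X)<\epsilon$ and $h\circ g=f\circ h$. *)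

theory Defs
  imports "HOL-Analysis.Analysis"
begin

text \<open>The whole type 'a plays the role of the metric space X.\<close>

definition cantor_space :: "'a::metric_space itself \<Rightarrow> bool" where
  "cantor_space _ \<longleftrightarrow> compact (UNIV :: 'a set)
     \<and> (\<forall>x::'a. x islimpt UNIV)
     \<and> (\<forall>S::'a set. connected S \<longrightarrow> (\<exists>a. S \<subseteq> {a}))"

definition is_homeo :: "('a::metric_space \<Rightarrow> 'a) \<Rightarrow> bool" where
  "is_homeo f \<longleftrightarrow> (\<exists>g. homeomorphism UNIV UNIV f g)"

definition dC0 :: "('a::metric_space \<Rightarrow> 'a) \<Rightarrow> ('a \<Rightarrow> 'a) \<Rightarrow> real" where
  "dC0 f g = (SUP x. dist (f x) (g x))"

definition Dhom :: "('a::metric_space \<Rightarrow> 'a) \<Rightarrow> ('a \<Rightarrow> 'a) \<Rightarrow> real" where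
  "Dhom f g = max (dC0 f g) (dC0 (inv f) (inv g))"

definition zpow :: "('a \<Rightarrow> 'a) \<Rightarrow> int \<Rightarrow> 'a \<Rightarrow> 'a" where
  "zpow f i = (if 0 \<le> i then f ^^ nat i else inv f ^^ nat (- i))"

definition equicontinuous_homeo :: "('a::metric_space \<Rightarrow> 'a) \<Rightarrow> bool" where
  "equicontinuous_homeo f \<longleftrightarrow> (\<forall>e>0. \<exists>d>0. \<forall>x y. dist x y \<le> d \<longrightarrow>
      (SUP i::int. dist (zpow f i x) (zpow f i y)) \<le> e)"

definition strict_periodic_shadowing :: "('a::metric_space \<Rightarrow> 'a) \<Rightarrow> bool" where
  "strict_periodic_shadowing f \<longleftrightarrow> (\<forall>e>0. \<exists>d>0. \<forall>(xs::nat \<Rightarrow> 'a) m. m \<ge> 1 \<longrightarrow>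
      (\<forall>i<m. dist (f (xs i)) (xs (Suc i)) \<le> d) \<longrightarrow> xs 0 = xs m \<longrightarrow>
      (\<exists>p. (f ^^ m) p = p \<and> (\<forall>i\<le>m. dist (xs i) ((f ^^ i) p) \<le> e)))"

definition topologically_stable :: "('a::metric_space \<Rightarrow> 'a) \<Rightarrow> bool" where
  "topologically_stable f \<longleftrightarrow> (\<forall>e>0. \<exists>d>0. \<forall>g. is_homeo g \<longrightarrow> Dhom f g < d \<longrightarrow>
      (\<exists>h. continuous_on UNIV h \<and> dC0 h id < e \<and> h \<circ> g = f \<circ> h))"

end

theory Submission
  imports Defs
begin


lemma clopen_nbhd:
  fixes x :: "'a::metric_space"
  assumes cs: "cantor_space TYPE('a)" and r: "r > 0"
  shows "\<exists>U. open U \<and> closed U \<and> x \<in> U \<and> U \<subseteq> ball x r"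
proof -
  have td: "\<And>S::'a set. connected S \<Longrightarrow> \<exists>a. S \<subseteq> {a}" and cpt: "compact (UNIV::'a set)"
    using cs unfolding cantor_space_def by auto
  have cc: "connected_component_of_set euclidean x = {x}"
  proof (rule set_eqI)
    fix y show "y \<in> connected_component_of_set euclidean x \<longleftrightarrow> y \<in> {x}"
      unfolding connected_component_of_def connectedin_iff_connected
    proof
      assume "y \<in> {z. \<exists>T. connected T \<and> x \<in> T \<and> z \<in> T}"
      then obtain T where "connected T" "x \<in> T" "y \<in> T" by auto
      with td[OF this(1)] show "y \<in> {x}" by blast
    next
      assume "y \<in> {x}" then show "y \<in> {z. \<exists>T. connected T \<and> x \<in> T \<and> z \<in> T}"
        using connected_sing by blast
    qed
  qed
  have C: "{x} \<in> connected_components_of euclidean"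
    using cc unfolding connected_components_of_def by (metis UNIV_I image_eqI topspace_euclidean)
  have lc: "locally_compact_space (euclidean::'a topology)"
    using cpt by (intro compact_imp_locally_compact_space) (simp add: compact_space_def compactin_euclidean_iff)
  have "separated_between euclidean {x} (- ball x r)"
    apply (rule separated_between_compact_connected_component[OF lc Hausdorff_space_euclidean C])
    using r by (auto simp: compactin_euclidean_iff closed_closedin[symmetric] disjnt_def)
  then obtain U V where "open U" "open V" "U \<union> V = UNIV" "disjnt U V" "x \<in> U" "- ball x r \<subseteq> V"
    unfolding separated_between_def by auto
  moreover have "U = - V" using \<open>U \<union> V = UNIV\<close> \<open>disjnt U V\<close> by (auto simp: disjnt_def)
  ultimately show ?thesis
    by (intro exI[of _ U]) (auto simp: closed_def)
qed

lemma bdd_dist: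
  assumes "compact (UNIV::'a::metric_space set)"
  shows "\<exists>B. \<forall>x y::'a. dist x y \<le> B"
proof -
  have "bounded (UNIV::'a set)" using assms compact_imp_bounded by auto
  then obtain c e where "\<forall>y::'a. dist c y \<le> e" unfolding bounded_def by auto
  then have "\<forall>x y::'a. dist x y \<le> 2*e"
    using dist_triangle3[of _ _ c] by (smt (verit))
  then show ?thesis by blast
qed

lemma bdd_range_dist:
  assumes "compact (UNIV::'a::metric_space set)"
  shows "bdd_above (range (\<lambda>i. dist (F i) (G i::'a)))"
proof -
  obtain B where "\<forall>x y::'a. dist x y \<le> B" using bdd_dist[OF assms] by auto
  then show ?thesis by (intro bdd_aboveI2[of _ _ B]) auto
qed

lemma base_partition:
  fixes eta :: real
  assumes cs: "cantor_space TYPE('a::metric_space)" and eta: "eta > 0"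
  shows "\<exists>(E::'a\<Rightarrow>'a\<Rightarrow>bool) lam. (\<forall>x. E x x) \<and> (\<forall>x y. E x y \<longrightarrow> E y x)
     \<and> (\<forall>x y z. E x y \<longrightarrow> E y z \<longrightarrow> E x z) \<and> lam > 0
     \<and> (\<forall>x y. dist x y < lam \<longrightarrow> E x y) \<and> (\<forall>x y. E x y \<longrightarrow> dist x y < eta)"
proof -
  have cpt: "compact (UNIV::'a set)" using cs unfolding cantor_space_def by auto
  have "\<forall>x::'a. \<exists>U. open U \<and> closed U \<and> x \<in> U \<and> U \<subseteq> ball x (eta/3)"
    using clopen_nbhd[OF cs] eta by auto
  then obtain U where U: "\<And>x::'a. open (U x) \<and> closed (U x) \<and> x \<in> U x \<and> U x \<subseteq> ball x (eta/3)"
    by metis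
  obtain T where T: "finite T" "UNIV \<subseteq> \<Union> (U ` T)"
    apply (rule compactE_image[OF cpt, of UNIV U]) using U by auto
  define E where "E a b \<longleftrightarrow> (\<forall>t\<in>T. a \<in> U t \<longleftrightarrow> b \<in> U t)" for a b
  have Ed: "dist a b < eta" if "E a b" for a b
  proof -
    obtain t where t: "t \<in> T" "a \<in> U t" using T by auto
    then have "b \<in> U t" using that unfolding E_def by auto
    then have "dist t a < eta/3" "dist t b < eta/3" using U t by (auto simp: subset_iff)
    moreover have "dist a b \<le> dist t a + dist t b" by (rule dist_triangle3)
    ultimately show ?thesis using eta by linarith
  qed
  have op: "open {b. E a b}" for a
  proof -
    have "{b. E a b} = (\<Inter>t\<in>T. if a \<in> U t then U t else - U t)"
      unfolding E_def by auto
    also have "open \<dots>" using T U by (intro open_INT) (auto simp: open_Compl)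
    finally show ?thesis .
  qed
  obtain lam where lam: "lam > 0" "\<And>x. \<exists>G\<in>range (\<lambda>a. {b. E a b}). ball x lam \<subseteq> G"
  proof (rule Heine_Borel_lemma[OF cpt, of "range (\<lambda>a. {b. E a b})"])
    have "x \<in> {b. E x b}" for x unfolding E_def by simp
    then show "UNIV \<subseteq> \<Union> (range (\<lambda>a. {b. E a b}))" by blast
    show "\<And>G. G \<in> range (\<lambda>a. {b. E a b}) \<Longrightarrow> open G" using op by blast
  qed (use that in auto)
  have "E x y" if "dist x y < lam" for x y
  proof -
    obtain a where "ball x lam \<subseteq> {b. E a b}" using lam by auto
    moreover have "x \<in> ball x lam" "y \<in> ball x lam" using that lam(1) by auto
    ultimately have "E a x" "E a y" by blast+
    then show ?thesis unfolding E_def by auto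
  qed
  moreover have "\<forall>x. E x x" "\<forall>x y. E x y \<longrightarrow> E y x" "\<forall>x y z. E x y \<longrightarrow> E y z \<longrightarrow> E x z"
    unfolding E_def by auto
  ultimately show ?thesis using lam(1) Ed
    by blast
qed


lemma compat_aux:
  assumes inv: "\<And>x. f' (f x) = x"
    and R: "\<forall>n. E ((f^^n) x) ((f^^n) y) \<and> E ((f'^^n) x) ((f'^^n) y)"
  shows "\<forall>n. E ((f^^n) (f x)) ((f^^n) (f y)) \<and> E ((f'^^n) (f x)) ((f'^^n) (f y))"
proof
  fix n
  have 1: "(f^^n) (f z) = (f^^Suc n) z" for z by (simp add: funpow_Suc_right del: funpow.simps)
  have 2: "E ((f'^^n) (f x)) ((f'^^n) (f y))"
  proof (cases n)
    case 0 then show ?thesis using R[rule_format, of 1] by simp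
  next
    case (Suc k)
    have "(f'^^Suc k) (f z) = (f'^^k) z" for z
      by (simp add: funpow_Suc_right inv del: funpow.simps)
    then show ?thesis using R Suc by simp
  qed
  show "E ((f^^n) (f x)) ((f^^n) (f y)) \<and> E ((f'^^n) (f x)) ((f'^^n) (f y))"
    using R[rule_format, of "Suc n"] 2 unfolding 1 by blast
qed

lemma zpow_nat: "zpow f (int n) = f^^n" by (simp add: zpow_def)
lemma zpow_neg: "inv f = f' \<Longrightarrow> zpow f (- int n) = f'^^n" by (cases "n = 0") (simp_all add: zpow_def)

lemma dyn_partition:
  fixes f f' :: "'a::metric_space \<Rightarrow> 'a"
  assumes cs: "cantor_space TYPE('a)" and hom: "homeomorphism UNIV UNIV f f'"
    and eq: "equicontinuous_homeo f" and eta: "eta > 0"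
  shows "\<exists>(R::'a\<Rightarrow>'a\<Rightarrow>bool) lam. (\<forall>x. R x x) \<and> (\<forall>x y. R x y \<longrightarrow> R y x)
     \<and> (\<forall>x y z. R x y \<longrightarrow> R y z \<longrightarrow> R x z)
     \<and> (\<forall>x y. R x y \<longrightarrow> R (f x) (f y)) \<and> (\<forall>x y. R x y \<longrightarrow> R (f' x) (f' y)) \<and> lam > 0
     \<and> (\<forall>x y. dist x y < lam \<longrightarrow> R x y) \<and> (\<forall>x y. R x y \<longrightarrow> dist x y < eta)"
proof -
  have cpt: "compact (UNIV::'a set)" using cs unfolding cantor_space_def by auto
  have i1: "\<And>x. f' (f x) = x" and i2: "\<And>x. f (f' x) = x" using hom unfolding homeomorphism_def by auto
  have invf: "inv f = f'" by (rule inv_unique_comp) (use i1 i2 in auto)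
  obtain E :: "'a \<Rightarrow> 'a \<Rightarrow> bool" and lam0 :: real where E: "\<forall>x. E x x" "\<forall>x y. E x y \<longrightarrow> E y x" "\<forall>x y z. E x y \<longrightarrow> E y z \<longrightarrow> E x z"
    "lam0 > 0" "\<forall>x y. dist x y < lam0 \<longrightarrow> E x y" "\<forall>x y. E x y \<longrightarrow> dist x y < eta"
    using base_partition[OF cs eta] by blast
  obtain d where d: "d > 0" "\<And>x y. dist x y \<le> d \<Longrightarrow> (SUP i::int. dist (zpow f i x) (zpow f i y)) \<le> lam0/2"
  proof -
    have "lam0/2 > 0" using E(4) by simp
    then show ?thesis using eq that unfolding equicontinuous_homeo_def by blast
  qed
  define R where "R x y \<longleftrightarrow> (\<forall>n. E ((f^^n) x) ((f^^n) y) \<and> E ((f'^^n) x) ((f'^^n) y))" for x y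
  have near: "R x y" if "dist x y < d" for x y
  proof -
    have S: "(SUP i::int. dist (zpow f i x) (zpow f i y)) \<le> lam0/2" using d that by auto
    have bd: "bdd_above (range (\<lambda>i::int. dist (zpow f i x) (zpow f i y)))"
      by (rule bdd_range_dist[OF cpt])
    have "dist (zpow f i x) (zpow f i y) < lam0" for i
      using cSUP_upper[OF UNIV_I bd, of i] S E(4) by linarith
    then have "E (zpow f i x) (zpow f i y)" for i using E(5) by blast
    from this[of "int n" for n] this[of "- int n" for n] show ?thesis
      unfolding R_def zpow_nat zpow_neg[OF invf] by blast
  qed
  have Rf: "R (f x) (f y)" if "R x y" for x y
    using compat_aux[of f' f E x y] i1 that unfolding R_def by blast
  have Rf': "R (f' x) (f' y)" if "R x y" for x y
    using compat_aux[of f f' E x y] i2 that unfolding R_def by blast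
  have "R x y \<longrightarrow> dist x y < eta" for x y
    unfolding R_def using E(6) funpow_0 by metis
  moreover have "\<forall>x. R x x" "\<forall>x y. R x y \<longrightarrow> R y x" "\<forall>x y z. R x y \<longrightarrow> R y z \<longrightarrow> R x z"
    unfolding R_def using E(1,2,3) by meson+
  ultimately show ?thesis using near Rf Rf' d(1)
    by (intro exI[of _ R] exI[of _ d]) blast
qed


locale psys =
  fixes f f' :: "'a::metric_space \<Rightarrow> 'a" and R :: "'a \<Rightarrow> 'a \<Rightarrow> bool" and lam eta :: real
  assumes i1: "\<And>x. f' (f x) = x" and i2: "\<And>x. f (f' x) = x"
  and Rrefl: "\<And>x. R x x" and Rsym: "\<And>x y. R x y \<Longrightarrow> R y x"
  and Rtrans: "\<And>x y z. R x y \<Longrightarrow> R y z \<Longrightarrow> R x z"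
  and Rf: "\<And>x y. R x y \<Longrightarrow> R (f x) (f y)" and Rf': "\<And>x y. R x y \<Longrightarrow> R (f' x) (f' y)"
  and lam: "lam > 0" and near: "\<And>x y. dist x y < lam \<Longrightarrow> R x y"
  and small: "\<And>x y. R x y \<Longrightarrow> dist x y < eta"
  and cpt: "compact (UNIV::'a set)"
begin

lemma Rfn: "R x y \<Longrightarrow> R ((f^^k) x) ((f^^k) y)"
  by (induct k) (auto intro: Rf)

lemma Rf'n: "R x y \<Longrightarrow> R ((f'^^k) x) ((f'^^k) y)"
  by (induct k) (auto intro: Rf')

lemma f'n_fn: "(f'^^k) ((f^^k) x) = x"
proof (induct k arbitrary: x)
  case 0 then show ?case by simp
next
  case (Suc k)
  have "(f'^^Suc k) = (f'^^k) \<circ> f'" by (rule funpow_Suc_right)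
  moreover have "(f^^Suc k) x = f ((f^^k) x)" by simp
  ultimately show ?case by (simp add: i1 Suc)
qed

lemma fn_f'n: "(f^^k) ((f'^^k) x) = x"
proof (induct k arbitrary: x)
  case 0 then show ?case by simp
next
  case (Suc k)
  have "(f^^Suc k) = (f^^k) \<circ> f" by (rule funpow_Suc_right)
  moreover have "(f'^^Suc k) x = f' ((f'^^k) x)" by simp
  ultimately show ?case by (simp add: i2 Suc)
qed

lemma cancel: "R ((f^^k) x) ((f^^k) y) \<Longrightarrow> R x y"
  using Rf'n[of "(f^^k) x" "(f^^k) y" k] by (simp add: f'n_fn)

lemma fadd: "(f^^(a+b)) x = (f^^a) ((f^^b) x)"
  by (simp add: funpow_add)

lemma periodic: "\<exists>n>0. R ((f^^n) x) x"
proof -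
  obtain K :: "'a set" where K: "finite K" "UNIV \<subseteq> (\<Union>k\<in>K. ball k lam)"
  proof (rule compactE_image[OF cpt, of UNIV "\<lambda>k. ball k lam"])
    show "open (ball k lam)" for k by simp
    show "UNIV \<subseteq> (\<Union>k\<in>UNIV. ball k lam)" using lam centre_in_ball by blast
  qed (use that in blast)
  have ex: "\<exists>c. c \<in> K \<and> dist c ((f^^a) x) < lam" for a
  proof -
    have "(f^^a) x \<in> (\<Union>k\<in>K. ball k lam)" using K(2) by blast
    then show ?thesis by auto
  qed
  define phi where "phi a = (SOME c. c \<in> K \<and> dist c ((f^^a) x) < lam)" for a
  have phi: "phi a \<in> K \<and> dist (phi a) ((f^^a) x) < lam" for a
    unfolding phi_def by (rule someI_ex[OF ex])
  have "range phi \<subseteq> K" using phi by auto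
  then have "finite (range phi)" using K(1) finite_subset by auto
  then have "\<not> inj phi" using finite_imageD infinite_UNIV_nat by blast
  then obtain a b where ab: "a \<noteq> b" "phi a = phi b" unfolding inj_def by blast
  have Rab: "R ((f^^a) x) ((f^^b) x)" if "phi a = phi b" for a b
  proof -
    have "R (phi a) ((f^^a) x)" "R (phi a) ((f^^b) x)" using phi[of a] phi[of b] that near by auto
    then show ?thesis using Rsym Rtrans by blast
  qed
  have main: "\<exists>n>0. R ((f^^n) x) x" if "a < b" "R ((f^^a) x) ((f^^b) x)" for a b
  proof -
    have "(f^^b) x = (f^^a) ((f^^(b-a)) x)" using fadd[of a "b-a" x] that by simp
    then have "R x ((f^^(b-a)) x)" using cancel[of a x] that by simp
    then show ?thesis using that Rsym by (intro exI[of _ "b-a"]) auto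
  qed
  show ?thesis
  proof (cases "a < b")
    case True then show ?thesis using main Rab ab by blast
  next
    case False then have "b < a" using ab by simp
    then show ?thesis using main Rab ab by (metis Rsym)
  qed
qed

definition per where "per x = (LEAST n. 0 < n \<and> R ((f^^n) x) x)"

lemma per: "0 < per x" "R ((f^^per x) x) x"
  using LeastI_ex[OF periodic[of x]] unfolding per_def by auto

lemma per_min: "0 < k \<Longrightarrow> k < per x \<Longrightarrow> \<not> R ((f^^k) x) x"
  unfolding per_def using not_less_Least by blast

lemma R_mult: "R ((f^^(q * per x)) x) x"
proof (induct q)
  case 0 then show ?case by (simp add: Rrefl)
next
  case (Suc q)
  have "(f^^(Suc q * per x)) x = (f^^(q * per x)) ((f^^per x) x)"
    using fadd[of "q * per x" "per x" x] by (simp add: add.commute)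
  moreover have "R ((f^^(q * per x)) ((f^^per x) x)) ((f^^(q * per x)) x)"
    using Rfn per(2) by blast
  ultimately show ?case using Suc Rtrans by metis
qed

lemma R_mod: "R ((f^^k) x) ((f^^(k mod per x)) x)"
proof -
  have "(f^^k) x = (f^^(k mod per x)) ((f^^(k div per x * per x)) x)"
    using fadd[of "k mod per x" "k div per x * per x" x] by simp
  then show ?thesis using Rfn[OF R_mult] by metis
qed

lemma R_eq_aux: "ra \<le> rb \<Longrightarrow> rb < per x \<Longrightarrow> R ((f^^ra) x) ((f^^rb) x) \<Longrightarrow> ra = rb"
proof (rule ccontr)
  assume a: "ra \<le> rb" "rb < per x" "R ((f^^ra) x) ((f^^rb) x)" "ra \<noteq> rb"
  have "(f^^rb) x = (f^^ra) ((f^^(rb-ra)) x)" using fadd[of ra "rb-ra" x] a by simp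
  then have "R x ((f^^(rb-ra)) x)" using cancel[of ra x] a by simp
  moreover have "0 < rb - ra" "rb - ra < per x" using a by simp_all
  ultimately show False using per_min[of "rb-ra" x] Rsym by blast
qed

lemma R_eq_mod: "R ((f^^a) x) ((f^^b) x) \<Longrightarrow> a mod per x = b mod per x"
proof -
  assume h: "R ((f^^a) x) ((f^^b) x)"
  have r: "R ((f^^(a mod per x)) x) ((f^^(b mod per x)) x)"
    using h R_mod[of a x] R_mod[of b x] Rsym Rtrans by meson
  have lt: "a mod per x < per x" "b mod per x < per x" using per(1) by auto
  show ?thesis
  proof (cases "a mod per x \<le> b mod per x")
    case True then show ?thesis using R_eq_aux r lt by blast
  next
    case False then show ?thesis using R_eq_aux[of "b mod per x" "a mod per x" x] Rsym[OF r] lt by auto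
  qed
qed

lemma R_dvd: "R ((f^^k) x) x \<Longrightarrow> per x dvd k"
  using R_eq_mod[of k x 0] by (simp add: mod_eq_0_iff_dvd)

definition orb where "orb x y \<longleftrightarrow> (\<exists>j. R ((f^^j) x) y)"

lemma orb_refl: "orb x x" unfolding orb_def by (rule exI[of _ 0]) (simp add: Rrefl)

lemma orb_R: "R x y \<Longrightarrow> orb x y" unfolding orb_def by (rule exI[of _ 0]) simp

lemma orb_sym: "orb x y \<Longrightarrow> orb y x"
proof -
  assume "orb x y"
  then obtain j where j: "R ((f^^j) x) y" unfolding orb_def by blast
  have "j \<le> j * per x" using per(1)[of x] by simp
  then have e: "(f^^(j * per x)) x = (f^^(j * per x - j)) ((f^^j) x)"
    using fadd[of "j * per x - j" j x] by simp
  have "R ((f^^(j * per x - j)) y) ((f^^(j * per x)) x)"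
    unfolding e using Rfn[OF Rsym[OF j]] by blast
  then have "R ((f^^(j * per x - j)) y) x" using R_mult Rtrans by blast
  then show ?thesis unfolding orb_def by blast
qed

lemma orb_trans: "orb x y \<Longrightarrow> orb y z \<Longrightarrow> orb x z"
proof -
  assume "orb x y" "orb y z"
  then obtain j k where j: "R ((f^^j) x) y" and k: "R ((f^^k) y) z" unfolding orb_def by blast
  have "R ((f^^(k+j)) x) ((f^^k) y)" unfolding fadd using Rfn[OF j] .
  then show ?thesis using k Rtrans unfolding orb_def by blast
qed

end


lemma fix_iter: "(f^^n) p = p \<Longrightarrow> (f^^(q*n)) p = p"
proof (induct q)
  case 0 then show ?case by simp
next
  case (Suc q)
  have "(f^^(Suc q * n)) p = (f^^(q*n + n)) p" by (simp add: add.commute)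
  also have "\<dots> = (f^^(q*n)) ((f^^n) p)" by (simp only: funpow_add comp_apply)
  finally show ?case using Suc by simp
qed

lemma fix_mod: "(f^^n) p = p \<Longrightarrow> (f^^a) p = (f^^(a mod n)) p"
proof -
  assume h: "(f^^n) p = p"
  have "(f^^a) p = (f^^(a mod n + a div n * n)) p" by simp
  also have "\<dots> = (f^^(a mod n)) ((f^^(a div n * n)) p)" by (simp only: funpow_add comp_apply)
  finally show ?thesis using fix_iter[OF h] by simp
qed

lemma cont_iter: "continuous_on UNIV (f::'a::topological_space \<Rightarrow> 'a) \<Longrightarrow> continuous_on UNIV (f^^n)"
proof (induct n)
  case 0
  show ?case by (simp only: funpow.simps(1) continuous_on_id')
next
  case (Suc n)
  then have "continuous_on UNIV (f \<circ> (f^^n))"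
    by (intro continuous_on_compose) (auto intro: continuous_on_subset)
  then show ?case by simp
qed

context psys begin

lemma stab_h:
  assumes P: "\<And>r. \<exists>p. (f^^per r) p = p \<and> (\<forall>i<per r. dist ((f^^i) r) ((f^^i) p) \<le> c)"
  shows "\<exists>h. (\<forall>x y. R x y \<longrightarrow> h x = h y) \<and> (\<forall>x. h (f x) = f (h x)) \<and> (\<forall>x. dist (h x) x < c + eta)"
proof -
  define rep where "rep x = (SOME y. orb y x)" for x
  define pt where "pt r = (SOME p. (f^^per r) p = p \<and> (\<forall>i<per r. dist ((f^^i) r) ((f^^i) p) \<le> c))" for r
  define idx where "idx x = (LEAST j. R ((f^^j) (rep x)) x)" for x
  define h where "h x = (f^^idx x) (pt (rep x))" for x
  have rep_orb: "orb (rep x) x" for x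
    unfolding rep_def by (rule someI[of "\<lambda>y. orb y x" x]) (rule orb_refl)
  have rep_eq: "rep x = rep x'" if "orb x x'" for x x'
  proof -
    have "(\<lambda>y. orb y x) = (\<lambda>y. orb y x')"
      using that orb_trans orb_sym by (intro ext iffI) blast+
    then show ?thesis unfolding rep_def by simp
  qed
  have idx_R: "R ((f^^idx x) (rep x)) x" for x
    unfolding idx_def using rep_orb[of x] unfolding orb_def by (rule LeastI_ex)
  have pt: "(f^^per r) (pt r) = (pt r) \<and> (\<forall>i<per r. dist ((f^^i) r) ((f^^i) (pt r)) \<le> c)" for r
    unfolding pt_def by (rule someI_ex[OF P])
  have hR: "h x = h x'" if "R x x'" for x x'
  proof -
    have r: "rep x = rep x'" using rep_eq orb_R that by blast
    have "(\<lambda>j. R ((f^^j) (rep x)) x) = (\<lambda>j. R ((f^^j) (rep x')) x')"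
      unfolding r using that Rsym Rtrans by (intro ext iffI) blast+
    then have "idx x = idx x'" unfolding idx_def by simp
    then show ?thesis unfolding h_def r by simp
  qed
  have hf: "h (f x) = f (h x)" for x
  proof -
    have "orb x (f x)" unfolding orb_def by (rule exI[of _ 1]) (simp add: Rrefl)
    then have r: "rep (f x) = rep x" using rep_eq by metis
    have a: "R ((f^^idx (f x)) (rep x)) (f x)" using idx_R[of "f x"] unfolding r .
    have b: "R ((f^^Suc (idx x)) (rep x)) (f x)" using Rf[OF idx_R[of x]] by simp
    have "idx (f x) mod per (rep x) = Suc (idx x) mod per (rep x)"
      using R_eq_mod a b Rsym Rtrans by blast
    then have "(f^^idx (f x)) (pt (rep x)) = (f^^Suc (idx x)) (pt (rep x))"
      using fix_mod[where f=f and n="per (rep x)" and p="pt (rep x)"] pt by metis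
    then show ?thesis unfolding h_def r by simp
  qed
  have hd: "dist (h x) x < c + eta" for x
  proof -
    define r where "r = rep x"
    define j where "j = idx x"
    have "R ((f^^(j mod per r)) r) x"
      using R_mod[of j r] idx_R[of x] Rsym Rtrans unfolding r_def j_def by blast
    then have "j \<le> j mod per r" unfolding j_def idx_def r_def by (rule Least_le)
    moreover have "j mod per r < per r" using per(1)[of r] by simp
    ultimately have "j < per r" by simp
    then have d1: "dist ((f^^j) r) ((f^^j) (pt r)) \<le> c" using pt by blast
    have d2: "dist ((f^^j) r) x < eta" using small idx_R unfolding r_def j_def by blast
    have hx: "h x = (f^^j) (pt r)" unfolding h_def r_def j_def by simp
    have "dist ((f^^j) (pt r)) x \<le> dist ((f^^j) r) ((f^^j) (pt r)) + dist ((f^^j) r) x"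
      by (rule dist_triangle3)
    then show ?thesis unfolding hx using d1 d2 by linarith
  qed
  show ?thesis using hR hf hd by blast
qed

lemma pert:
  assumes contf: "continuous_on UNIV f" and contf': "continuous_on UNIV f'"
  shows "\<exists>g g'. homeomorphism UNIV UNIV g g' \<and> (\<forall>y. R (g y) (f y)) \<and> (\<forall>y. R (g' y) (f' y))
            \<and> (g^^per x0) x0 = x0"
proof -
  define n where "n = per x0"
  define s where "s y = (if R y x0 then (f'^^n) y else y)" for y
  define s' where "s' y = (if R y x0 then (f^^n) y else y)" for y
  have pn: "R ((f^^n) x0) x0" unfolding n_def by (rule per(2))
  have A: "R ((f^^n) y) x0" if "R y x0" for y using Rfn[OF that, of n] pn Rtrans by blast
  have "R x0 ((f'^^n) x0)" using Rf'n[OF pn, of n] by (simp add: f'n_fn)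
  then have B: "R ((f'^^n) y) x0" if "R y x0" for y using Rf'n[OF that, of n] Rsym Rtrans by blast
  have ss': "s (s' y) = y" for y
  proof (cases "R y x0")
    case True then have "s' y = (f^^n) y" "R ((f^^n) y) x0" using A unfolding s'_def by auto
    then show ?thesis unfolding s_def by (simp add: f'n_fn)
  next
    case False then show ?thesis unfolding s_def s'_def by simp
  qed
  have s's: "s' (s y) = y" for y
  proof (cases "R y x0")
    case True then have "s y = (f'^^n) y" "R ((f'^^n) y) x0" using B unfolding s_def by auto
    then show ?thesis unfolding s'_def by (simp add: fn_f'n)
  next
    case False then show ?thesis unfolding s_def s'_def by simp
  qed
  have Rs: "R (s y) y" for y
  proof (cases "R y x0")
    case True then have "s y = (f'^^n) y" unfolding s_def by simp
    then show ?thesis using B[OF True] Rsym[OF True] Rtrans by metis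
  next
    case False then show ?thesis unfolding s_def using Rrefl by simp
  qed
  have Rs': "R (s' y) y" for y
  proof (cases "R y x0")
    case True then have "s' y = (f^^n) y" unfolding s'_def by simp
    then show ?thesis using A[OF True] Rsym[OF True] Rtrans by metis
  next
    case False then show ?thesis unfolding s'_def using Rrefl by simp
  qed
  define C where "C = {y. R y x0}"
  have oC: "open C" unfolding open_dist
  proof (intro ballI exI conjI allI impI)
    fix x y assume "x \<in> C" "dist y x < lam"
    then show "y \<in> C" unfolding C_def using near Rtrans by blast
  qed (rule lam)
  have oC': "open (- C)" unfolding open_dist
  proof (intro ballI exI conjI allI impI)
    fix x y assume "x \<in> - C" "dist y x < lam"
    then show "y \<in> - C" unfolding C_def using near Rtrans Rsym by blast
  qed (rule lam)
  have cC: "closed C" "closed (- C)" using oC oC' by (auto simp: closed_def)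
  have cs: "continuous_on UNIV s"
  proof -
    have "continuous_on (C \<union> - C) (\<lambda>y. if R y x0 then (f'^^n) y else y)"
      apply (rule continuous_on_cases[OF cC])
      using cont_iter[OF contf'] continuous_on_id by (auto intro: continuous_on_subset simp: C_def)
    then show ?thesis unfolding s_def by simp
  qed
  have cs': "continuous_on UNIV s'"
  proof -
    have "continuous_on (C \<union> - C) (\<lambda>y. if R y x0 then (f^^n) y else y)"
      apply (rule continuous_on_cases[OF cC])
      using cont_iter[OF contf] continuous_on_id by (auto intro: continuous_on_subset simp: C_def)
    then show ?thesis unfolding s'_def by simp
  qed
  define g where "g = s \<circ> f"
  define g' where "g' = f' \<circ> s'"
  have hom: "homeomorphism UNIV UNIV g g'"
  proof (rule homeomorphismI)
    show "continuous_on UNIV g" unfolding g_def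
      by (intro continuous_on_compose) (auto intro: continuous_on_subset contf cs)
    show "continuous_on UNIV g'" unfolding g'_def
      by (intro continuous_on_compose) (auto intro: continuous_on_subset contf' cs')
  qed (auto simp: g_def g'_def ss' s's i1 i2)
  have Rg: "R (g y) (f y)" for y unfolding g_def using Rs by simp
  have Rg': "R (g' y) (f' y)" for y unfolding g'_def using Rf'[OF Rs'] by simp
  have low: "(g^^k) x0 = (f^^k) x0" if "k < n" for k
    using that
  proof (induct k)
    case 0 then show ?case by simp
  next
    case (Suc k)
    have "\<not> R ((f^^Suc k) x0) x0" using per_min[of "Suc k" x0] Suc(2) unfolding n_def by simp
    then show ?case using Suc by (simp add: g_def s_def)
  qed
  have np: "0 < n" unfolding n_def by (rule per(1))
  then obtain m where m: "n = Suc m" by (cases n) auto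
  have "(g^^n) x0 = g ((f^^m) x0)" using low[of m] m by simp
  also have "\<dots> = (f'^^n) ((f^^n) x0)" unfolding g_def s_def using pn m by simp
  also have "\<dots> = x0" by (simp add: f'n_fn)
  finally have "(g^^per x0) x0 = x0" unfolding n_def .
  then show ?thesis using hom Rg Rg' by blast
qed

end


theorem corollary1p2:
  fixes f :: "'a::metric_space \<Rightarrow> 'a"
  assumes "cantor_space TYPE('a)"
    and "is_homeo f"
    and "equicontinuous_homeo f"
  shows "topologically_stable f \<longleftrightarrow> strict_periodic_shadowing f"
proof -
  note cs = assms(1)
  have cpt: "compact (UNIV::'a set)" using cs unfolding cantor_space_def by auto
  obtain f' where hom: "homeomorphism UNIV UNIV f f'" using assms(2) unfolding is_homeo_def by blast
  have i1: "\<And>x. f' (f x) = x" and i2: "\<And>x. f (f' x) = x"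
    and contf: "continuous_on UNIV f" and contf': "continuous_on UNIV f'"
    using hom unfolding homeomorphism_def by auto
  have invf: "inv f = f'" by (rule inv_unique_comp) (use i1 i2 in auto)
  have dle: "dist (F x) (G x) \<le> dC0 F G" for F G :: "'a \<Rightarrow> 'a" and x
    unfolding dC0_def by (rule cSUP_upper[OF UNIV_I bdd_range_dist[OF cpt]])
  show ?thesis
  proof
    assume ts: "topologically_stable f"
    show "strict_periodic_shadowing f" unfolding strict_periodic_shadowing_def
    proof (intro allI impI)
      fix e :: real assume e: "e > 0"
      obtain dT where dT: "dT > 0" and tsd: "\<And>g. is_homeo g \<Longrightarrow> Dhom f g < dT \<Longrightarrow>
          \<exists>h. continuous_on UNIV h \<and> dC0 h id < e/2 \<and> h \<circ> g = f \<circ> h"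
      proof -
        have "e/2 > 0" using e by simp
        then show ?thesis using ts that unfolding topologically_stable_def by blast
      qed
      define eta where "eta = min (e/2) (dT/2)"
      have eta: "eta > 0" using e dT by (simp add: eta_def)
      obtain R :: "'a \<Rightarrow> 'a \<Rightarrow> bool" and lam :: real where RR: "(\<forall>x. R x x)" "(\<forall>x y. R x y \<longrightarrow> R y x)"
         "(\<forall>x y z. R x y \<longrightarrow> R y z \<longrightarrow> R x z)"
         "(\<forall>x y. R x y \<longrightarrow> R (f x) (f y))" "(\<forall>x y. R x y \<longrightarrow> R (f' x) (f' y))" "lam > 0"
         "(\<forall>x y. dist x y < lam \<longrightarrow> R x y)" "(\<forall>x y. R x y \<longrightarrow> dist x y < eta)"
        using dyn_partition[OF cs hom assms(3) eta] apply (elim exE conjE) apply (rule that) by assumption+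
      interpret P: psys f f' R lam eta
        by (rule psys.intro[where f=f and f'=f' and R=R and lam=lam and eta=eta, OF i1 i2 RR(1)[rule_format] RR(2)[rule_format] RR(3)[rule_format]
          RR(4)[rule_format] RR(5)[rule_format] RR(6) RR(7)[rule_format] RR(8)[rule_format] cpt])
      show "\<exists>d>0. \<forall>(xs::nat \<Rightarrow> 'a) m. m \<ge> 1 \<longrightarrow>
        (\<forall>i<m. dist (f (xs i)) (xs (Suc i)) \<le> d) \<longrightarrow> xs 0 = xs m \<longrightarrow>
        (\<exists>p. (f ^^ m) p = p \<and> (\<forall>i\<le>m. dist (xs i) ((f ^^ i) p) \<le> e))"
      proof (intro exI[of _ "lam/2"] conjI allI impI)
        show "lam/2 > 0" using RR(6) by simp
        fix xs :: "nat \<Rightarrow> 'a" and m :: nat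
        assume m: "m \<ge> 1" and ch: "\<forall>i<m. dist (f (xs i)) (xs (Suc i)) \<le> lam/2" and cl: "xs 0 = xs m"
        define x0 where "x0 = xs 0"
        have chR: "R ((f^^i) x0) (xs i)" if "i \<le> m" for i
          using that
        proof (induct i)
          case 0 then show ?case by (simp add: x0_def P.Rrefl)
        next
          case (Suc i)
          have "R (f ((f^^i) x0)) (f (xs i))" using Suc by (intro P.Rf) simp
          moreover have "R (f (xs i)) (xs (Suc i))"
          proof -
            have "i < m" using Suc(2) by simp
            then have "dist (f (xs i)) (xs (Suc i)) \<le> lam/2" using ch by blast
            then have "dist (f (xs i)) (xs (Suc i)) < lam" using RR(6) by linarith
            then show ?thesis by (rule P.near)
          qed
          ultimately show ?case using P.Rtrans by simp
        qed
        have "R ((f^^m) x0) x0" using chR[of m] cl unfolding x0_def by simp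
        then have dvd: "P.per x0 dvd m" by (rule P.R_dvd)
        obtain g g' where g: "homeomorphism UNIV UNIV g g'" "\<forall>y. R (g y) (f y)" "\<forall>y. R (g' y) (f' y)"
          "(g^^P.per x0) x0 = x0"
          using P.pert[OF contf contf', of x0] by blast
        have ig: "is_homeo g" unfolding is_homeo_def using g(1) by blast
        have invg: "inv g = g'" by (rule inv_unique_comp) (use g(1) in \<open>auto simp: homeomorphism_def\<close>)
        have "dC0 f g \<le> eta" unfolding dC0_def
          by (rule cSUP_least) (use g(2) P.small P.Rsym in \<open>auto intro: less_imp_le\<close>)
        moreover have "dC0 (inv f) (inv g) \<le> eta" unfolding dC0_def invf invg
          by (rule cSUP_least) (use g(3) P.small P.Rsym in \<open>auto intro: less_imp_le\<close>)
        ultimately have "Dhom f g < dT" unfolding Dhom_def eta_def using dT by auto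
        then obtain h where h: "continuous_on UNIV h" "dC0 h id < e/2" "h \<circ> g = f \<circ> h"
          using tsd ig by blast
        have hg: "h ((g^^k) y) = (f^^k) (h y)" for k y
        proof (induct k)
          case 0 then show ?case by simp
        next
          case (Suc k)
          have "h (g ((g^^k) y)) = f (h ((g^^k) y))" using h(3) by (metis comp_apply)
          then show ?case using Suc by simp
        qed
        have gf: "R ((g^^i) x0) ((f^^i) x0)" for i
        proof (induct i)
          case 0 then show ?case by (simp add: P.Rrefl)
        next
          case (Suc i)
          have "R (g ((g^^i) x0)) (f ((g^^i) x0))" using g(2) by blast
          moreover have "R (f ((g^^i) x0)) (f ((f^^i) x0))" using P.Rf Suc by blast
          ultimately show ?case using P.Rtrans by simp
        qed
        define p where "p = h x0"
        have pp: "(f^^P.per x0) p = p" unfolding p_def using hg[of "P.per x0" x0] g(4) by simp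
        obtain q where q: "m = q * P.per x0" using dvd by (auto simp: dvd_def mult.commute)
        have "(f^^m) p = p" unfolding q by (rule fix_iter[OF pp])
        moreover have "dist (xs i) ((f^^i) p) \<le> e" if "i \<le> m" for i
        proof -
          define y where "y = (g^^i) x0"
          have fp: "(f^^i) p = h y" unfolding p_def y_def using hg[of i x0] by simp
          have "R (xs i) y" using chR[OF that] gf[of i] P.Rsym P.Rtrans unfolding y_def by blast
          then have "dist (xs i) y < eta" by (rule P.small)
          then have d1: "dist (xs i) y < e/2" unfolding eta_def by simp
          have "dist (h y) (id y) \<le> dC0 h id" by (rule dle)
          then have d2: "dist y (h y) < e/2" using h(2) by (simp add: dist_commute)
          have "dist (xs i) (h y) \<le> dist (xs i) y + dist y (h y)" by (rule dist_triangle)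
          then show ?thesis unfolding fp using d1 d2 by linarith
        qed
        ultimately show "\<exists>p. (f ^^ m) p = p \<and> (\<forall>i\<le>m. dist (xs i) ((f ^^ i) p) \<le> e)" by blast
      qed
    qed
  next
    assume sp: "strict_periodic_shadowing f"
    show "topologically_stable f" unfolding topologically_stable_def
    proof (intro allI impI)
      fix e :: real assume e: "e > 0"
      obtain d1 where d1: "d1 > 0" and spd: "\<And>(xs::nat \<Rightarrow> 'a) m. m \<ge> 1 \<Longrightarrow>
          (\<forall>i<m. dist (f (xs i)) (xs (Suc i)) \<le> d1) \<Longrightarrow> xs 0 = xs m \<Longrightarrow>
          (\<exists>p. (f ^^ m) p = p \<and> (\<forall>i\<le>m. dist (xs i) ((f ^^ i) p) \<le> e/3))"
      proof -
        have "e/3 > 0" using e by simp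
        then show ?thesis using sp that unfolding strict_periodic_shadowing_def by blast
      qed
      define eta where "eta = min (e/3) d1"
      have eta: "eta > 0" using e d1 by (simp add: eta_def)
      obtain R :: "'a \<Rightarrow> 'a \<Rightarrow> bool" and lam :: real where RR: "(\<forall>x. R x x)" "(\<forall>x y. R x y \<longrightarrow> R y x)"
         "(\<forall>x y z. R x y \<longrightarrow> R y z \<longrightarrow> R x z)"
         "(\<forall>x y. R x y \<longrightarrow> R (f x) (f y))" "(\<forall>x y. R x y \<longrightarrow> R (f' x) (f' y))" "lam > 0"
         "(\<forall>x y. dist x y < lam \<longrightarrow> R x y)" "(\<forall>x y. R x y \<longrightarrow> dist x y < eta)"
        using dyn_partition[OF cs hom assms(3) eta] apply (elim exE conjE) apply (rule that) by assumption+
      interpret P: psys f f' R lam eta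
        by (rule psys.intro[where f=f and f'=f' and R=R and lam=lam and eta=eta, OF i1 i2 RR(1)[rule_format] RR(2)[rule_format] RR(3)[rule_format]
          RR(4)[rule_format] RR(5)[rule_format] RR(6) RR(7)[rule_format] RR(8)[rule_format] cpt])
      have Pr: "\<exists>p. (f^^P.per r) p = p \<and> (\<forall>i<P.per r. dist ((f^^i) r) ((f^^i) p) \<le> e/3)" for r
      proof -
        define n where "n = P.per r"
        have n: "n \<ge> 1" using P.per(1)[of r] unfolding n_def by simp
        define xs where "xs i = (if i < n then (f^^i) r else r)" for i
        have "\<forall>i<n. dist (f (xs i)) (xs (Suc i)) \<le> d1"
        proof (intro allI impI)
          fix i assume i: "i < n"
          show "dist (f (xs i)) (xs (Suc i)) \<le> d1"
          proof (cases "Suc i < n")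
            case True then show ?thesis using i d1 unfolding xs_def by simp
          next
            case False then have "Suc i = n" using i by simp
            then have "f (xs i) = (f^^n) r" "xs (Suc i) = r" using i unfolding xs_def by auto
            moreover have "dist ((f^^n) r) r < eta" using P.small[OF P.per(2)] unfolding n_def .
            ultimately show ?thesis unfolding eta_def by simp
          qed
        qed
        moreover have "xs 0 = xs n" using n unfolding xs_def by simp
        ultimately obtain p where p: "(f^^n) p = p" "\<forall>i\<le>n. dist (xs i) ((f^^i) p) \<le> e/3"
          using spd[OF n] by blast
        have "\<forall>i<n. dist ((f^^i) r) ((f^^i) p) \<le> e/3"
        proof (intro allI impI)
          fix i assume i: "i < n"
          then have "dist (xs i) ((f^^i) p) \<le> e/3" using p(2) by simp
          then show "dist ((f^^i) r) ((f^^i) p) \<le> e/3" using i unfolding xs_def by simp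
        qed
        then show ?thesis using p(1) unfolding n_def by blast
      qed
      obtain h where h: "\<forall>x y. R x y \<longrightarrow> h x = h y" "\<forall>x. h (f x) = f (h x)" "\<forall>x. dist (h x) x < e/3 + eta"
        using P.stab_h[OF Pr] by blast
      show "\<exists>d>0. \<forall>g. is_homeo g \<longrightarrow> Dhom f g < d \<longrightarrow>
          (\<exists>h. continuous_on UNIV h \<and> dC0 h id < e \<and> h \<circ> g = f \<circ> h)"
      proof (intro exI[of _ lam] conjI allI impI)
        show "lam > 0" by (rule RR(6))
        fix g :: "'a \<Rightarrow> 'a" assume "is_homeo g" "Dhom f g < lam"
        then have "dC0 f g < lam" unfolding Dhom_def by simp
        then have "dist (f x) (g x) < lam" for x using dle[where F=f and G=g and x=x] by simp
        then have "R (f x) (g x)" for x using P.near by blast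
        then have "h (g x) = f (h x)" for x using h(1,2) by metis
        then have "h \<circ> g = f \<circ> h" by auto
        moreover have "continuous_on UNIV h" unfolding continuous_on_iff
        proof (intro ballI allI impI exI[of _ lam] conjI)
          fix x x' :: 'a and e' :: real assume "e' > 0" "dist x' x < lam"
          then have "h x' = h x" using h(1) P.near by blast
          then show "dist (h x') (h x) < e'" using \<open>e' > 0\<close> by simp
        qed (rule RR(6))
        moreover have "dC0 h id < e"
        proof -
          have "dC0 h id \<le> e/3 + eta" unfolding dC0_def
            by (rule cSUP_least) (use h(3) in \<open>auto intro: less_imp_le\<close>)
          then show ?thesis unfolding eta_def using e by linarith
        qed
        ultimately show "\<exists>h. continuous_on UNIV h \<and> dC0 h id < e \<and> h \<circ> g = f \<circ> h" by blast
      qed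
    qed
  qed
qed

end
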